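(* Let $n,k,l$ be nonnegative integers with $k+l\le n$, let $\alpha,\beta>-1$, set $\sigma=\alpha+\beta+1$, and for $h=k,\ldots,n-l$ and $i=k+l,\ldots,n$ define \[ z_{hi}=\binom{n}{h}\frac{(2i+\sigma)(k+l-n)_{i-k-l}(\alpha+2l+1)_{n-l-h}(\beta+2k+1)_{h-k}}{(\alpha+2l+1)_{i-k-l}\,(i+k+l+\sigma)_{n+1-k-l}},\qquad w_{hi}=Q_{i-k-l}(h-k;\,\beta+2k,\,\alpha+2l,\,n-k-l). \] Then for each fixed $h$ (and whenever the indices involved lie in the range $k+l\le i\le n$): \[ z_{h,k+l}=\binom{n}{h}\frac{(\alpha+2l+1)_{n-l-h}(\beta+2k+1)_{h-k}}{(2k+2l+\sigma+1)_{n-k-l}}, \] \[ z_{hi}=\frac{(2i+\sigma)(i+k+l+\alpha+\beta)(i-n-1)}{(\alpha+l+i-k)(i+n+\sigma)(2i+\alpha+\beta-1)}\,z_{h,i-1}\qquad(i=k+l+1,\ldots,n); \] and \[ w_{h,k+l}=1,\qquad w_{h,k+l+1}=1+\frac{(h-k)(2k+2l+\sigma+1)}{(k+l-n)(\beta+2k+1)}, \] \[ w_{hi}=P_h(i)\,w_{h,i-1}+S(i)\,w_{h,i-2}\qquad(i=k+l+2,\ldots,n), \] where \[ S(i)=\frac{(i-k-l-1)(i+\beta+\alpha+n)(i+l+\alpha-k-1)(2i+\beta+\alpha)}{(2i+\beta+\alpha-2)(i+k+l+\beta+\alpha)(i+k+\beta-l)(i-n-1)}, \] \[ P_h(i)=1-S(i)-\frac{(k-h)(2i+\alpha+\beta-1)_2}{(i+k+l+\alpha+\beta)(i+k+\beta-l)(i-n-1)}.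 \]
   Context: Pochhammer symbol: $(a)_0=1$, $(a)_j=a(a+1)\cdots(a+j-1)$. Hahn polynomials: for a nonnegative integer $N$, $a,b>-1$ and $m=0,1,\ldots,N$, $Q_m(x;a,b,N)=\sum_{j=0}^m\frac{(-m)_j(m+a+b+1)_j(-x)_j}{j!\,(a+1)_j\,(-N)_j}$. (The products $d_{hi}=z_{hi}w_{hi}$ are the coefficients of the Bernstein polynomial $B^n_h(x)=\binom nh x^h(1-x)^{n-h}$ in the basis of modified Jacobi polynomials $J_{i,k,l}^{(\alpha,\beta)}(x)=(1-x)^lx^kR^{(\alpha+2l,\beta+2k)}_{i-k-l}(x)$, $i=k+l,\ldots,n$, with $R^{(a,b)}_m$ the shifted Jacobi polynomials.) *)

theory Defs
  imports Complex_Main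
begin

definition hahnQ :: "nat \<Rightarrow> real \<Rightarrow> real \<Rightarrow> real \<Rightarrow> nat \<Rightarrow> real" where
  "hahnQ m x a b N =
     (\<Sum>j=0..m. pochhammer (- real m) j * pochhammer (real m + a + b + 1) j * pochhammer (- x) j
        / (fact j * pochhammer (a + 1) j * pochhammer (- real N) j))"

definition zcoef :: "nat \<Rightarrow> nat \<Rightarrow> nat \<Rightarrow> real \<Rightarrow> real \<Rightarrow> nat \<Rightarrow> nat \<Rightarrow> real" where
  "zcoef n k l \<alpha> \<beta> h i =
     (let \<sigma> = \<alpha> + \<beta> + 1 in
      real (n choose h) *
      ((2 * real i + \<sigma>) * pochhammer (real k + real l - real n) (i - k - l)
        * pochhammer (\<alpha> + 2 * real l + 1) (n - l - h) * pochhammer (\<beta> + 2 * real k + 1) (h - k))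
      / (pochhammer (\<alpha> + 2 * real l + 1) (i - k - l) * pochhammer (real i + real k + real l + \<sigma>) (n + 1 - k - l)))"

definition wcoef :: "nat \<Rightarrow> nat \<Rightarrow> nat \<Rightarrow> real \<Rightarrow> real \<Rightarrow> nat \<Rightarrow> nat \<Rightarrow> real" where
  "wcoef n k l \<alpha> \<beta> h i =
     hahnQ (i - k - l) (real h - real k) (\<beta> + 2 * real k) (\<alpha> + 2 * real l) (n - k - l)"

definition Scoef :: "nat \<Rightarrow> nat \<Rightarrow> nat \<Rightarrow> real \<Rightarrow> real \<Rightarrow> nat \<Rightarrow> real" where
  "Scoef n k l \<alpha> \<beta> i =
     ((real i - real k - real l - 1) * (real i + \<beta> + \<alpha> + real n) * (real i + real l + \<alpha> - real k - 1)
        * (2 * real i + \<beta> + \<alpha>))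
     / ((2 * real i + \<beta> + \<alpha> - 2) * (real i + real k + real l + \<beta> + \<alpha>)
        * (real i + real k + \<beta> - real l) * (real i - real n - 1))"

definition Pcoef :: "nat \<Rightarrow> nat \<Rightarrow> nat \<Rightarrow> real \<Rightarrow> real \<Rightarrow> nat \<Rightarrow> nat \<Rightarrow> real" where
  "Pcoef n k l \<alpha> \<beta> h i =
     1 - Scoef n k l \<alpha> \<beta> i
       - (real k - real h) * pochhammer (2 * real i + \<alpha> + \<beta> - 1) 2
         / ((real i + real k + real l + \<alpha> + \<beta>) * (real i + real k + \<beta> - real l) * (real i - real n - 1))"

end

theory Submission
  imports Defs
begin
lemma core_poly2:
  fixes m r a b N u q v v' P1 d :: real
  assumes hu: "u = m+a+b+1" and hv: "u*v' = v*(u+r)" and hp: "(- m)*P1 = q*(-m+r)"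
  shows "u*m*((2*m+a+b)*(2*m+a+b+1)*(2*m+a+b+2) * (q*v*d*((r+1) * (a+1+r) * (- N + r)) - (r+1) * (q*(- m + r)*v*(u + r)*d))
   - ((m+a+b+1)*(m+a+1)*(N-m)*(2*m+a+b) * ((- m - 1) * q * v' * (u + 1 + r) * d)
     - ((m+a+b+1)*(m+a+1)*(N-m)*(2*m+a+b) + m*(m+a+b+N+1)*(m+b)*(2*m+a+b+2)) * (q*(- m + r)*v*(u + r)*d)
     + m*(m+a+b+N+1)*(m+b)*(2*m+a+b+2) * (P1 * (- m + 1 + r) * ((u - 1) * v) * d))) = 0"
  using assms by algebra


definition cc :: "nat \<Rightarrow> real \<Rightarrow> real \<Rightarrow> nat \<Rightarrow> nat \<Rightarrow> real" where
  "cc m a b N j = pochhammer (- real m) j * pochhammer (real m + a + b + 1) j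
      / (fact j * pochhammer (a + 1) j * pochhammer (- real N) j)"

lemma hahn_ext:
  assumes "m \<le> M"
  shows "hahnQ m x a b N = (\<Sum>j=0..M. cc m a b N j * pochhammer (- x) j)"
proof -
  have "hahnQ m x a b N = (\<Sum>j=0..m. cc m a b N j * pochhammer (- x) j)"
    unfolding hahnQ_def cc_def by (rule sum.cong) auto
  also have "\<dots> = (\<Sum>j=0..M. cc m a b N j * pochhammer (- x) j)"
    by (rule sum.mono_neutral_left) (use assms in \<open>auto simp: cc_def pochhammer_of_nat_eq_0_iff\<close>)
  finally show ?thesis .
qed

lemma cc_Suc:
  "cc m a b N (Suc r) = cc m a b N r * ((- real m + r) * (real m + a + b + 1 + r))
     / ((r + 1) * (a + 1 + r) * (- real N + r))"
  unfolding cc_def by (simp add: pochhammer_Suc field_simps)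

lemma term_id:
  assumes m1: "1 \<le> m" and mN: "m + 1 \<le> N" and r: "r \<le> m" and a: "a + 1 > 0"
    and u: "real m + a + b + 1 > 0"
  defines "E \<equiv> (2*real m+a+b)*(2*real m+a+b+1)*(2*real m+a+b+2)"
    and "A \<equiv> (real m+a+b+1)*(real m+a+1)*(real N-real m)*(2*real m+a+b)"
    and "C \<equiv> real m*(real m+a+b+real N+1)*(real m+b)*(2*real m+a+b+2)"
  shows "E * (cc m a b N r - (r+1) * cc m a b N (Suc r))
     = A * cc (m+1) a b N (Suc r) - (A + C) * cc m a b N (Suc r) + C * cc (m-1) a b N (Suc r)"
proof -
  define u where "u = real m + a + b + 1"
  define q where "q = pochhammer (- real m) r"
  define v where "v = pochhammer u r"
  define d where "d = 1 / (fact (Suc r) * pochhammer (a + 1) (Suc r) * pochhammer (- real N) (Suc r))"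
  have rN: "- real N + r \<noteq> 0" using mN r by simp
  have ar: "a + 1 + r > 0" using a by simp
  have pa: "pochhammer (a+1) r \<noteq> 0" using pochhammer_pos[OF a, of r] by simp
  have pN: "pochhammer (- real N) r \<noteq> 0" using mN r by (simp add: pochhammer_of_nat_eq_0_iff)
  have fr: "fact r \<noteq> (0::real)" by simp
  have den: "fact (Suc r) * pochhammer (a+1) (Suc r) * pochhammer (- real N) (Suc r)
     = (fact r * pochhammer (a+1) r * pochhammer (- real N) r) * ((r+1) * (a+1+r) * (- real N + r))"
    by (simp add: pochhammer_Suc algebra_simps)
  have K0: "(r+1) * (a+1+r) * (- real N + r) \<noteq> 0" using rN ar by auto
  have dk: "d * ((r+1) * (a+1+r) * (- real N + r)) = 1 / (fact r * pochhammer (a+1) r * pochhammer (- real N) r)"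
    unfolding d_def den using K0 by simp
  have c0: "cc m a b N r = q * v * d * ((r+1) * (a+1+r) * (- real N + r))"
  proof -
    have "q * v * d * ((r+1) * (a+1+r) * (- real N + r)) = q * v * (d * ((r+1) * (a+1+r) * (- real N + r)))"
      by simp
    also have "\<dots> = cc m a b N r" unfolding dk cc_def q_def v_def u_def by simp
    finally show ?thesis by simp
  qed
  have c1: "cc m a b N (Suc r) = q * (- real m + r) * v * (u + r) * d"
    unfolding cc_def q_def v_def d_def u_def by (simp add: pochhammer_Suc)
  have p1: "pochhammer (u+1) r = v * (u + r) / u"
  proof -
    have "u * pochhammer (u+1) r = v * (u + r)"
      unfolding v_def using pochhammer_rec[of u r] pochhammer_Suc[of u r] by simp
    thus ?thesis using u unfolding u_def by (simp add: field_simps)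
  qed
  define v' where "v' = pochhammer (u+1) r"
  have hv: "u * v' = v * (u + r)"
    unfolding v'_def v_def using pochhammer_rec[of u r] pochhammer_Suc[of u r] by simp
  have c2: "cc (m+1) a b N (Suc r) = (- real m - 1) * q * v' * (u + 1 + r) * d"
  proof -
    have "pochhammer (- real (m+1)) (Suc r) = (- real m - 1) * q"
      unfolding q_def by (simp add: pochhammer_rec)
    moreover have "pochhammer (real (m+1) + a + b + 1) (Suc r) = v' * (u + 1 + r)"
      unfolding u_def v'_def by (simp add: pochhammer_Suc add_ac)
    ultimately show ?thesis unfolding cc_def d_def by simp
  qed
  define P1 where "P1 = pochhammer (- real m + 1) r"
  have hp: "(- real m) * P1 = q * (- real m + r)"
    unfolding q_def P1_def using pochhammer_rec[of "- real m" r] pochhammer_Suc[of "- real m" r] by simp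
  have c3: "cc (m-1) a b N (Suc r) = P1 * (- real m + 1 + r) * ((u - 1) * v) * d"
  proof -
    have mm: "real (m-1) = real m - 1" using m1 by simp
    have "pochhammer (- real (m-1)) (Suc r) = P1 * (- real m + 1 + r)"
      unfolding mm P1_def by (simp add: pochhammer_Suc)
    moreover have "pochhammer (real (m-1) + a + b + 1) (Suc r) = (u - 1) * v"
      unfolding mm u_def v_def by (simp add: pochhammer_rec add_ac)
    ultimately show ?thesis unfolding cc_def d_def by simp
  qed
  have um: "u \<noteq> 0" "real m \<noteq> 0" using u m1 unfolding u_def by auto
  have key: "u * real m * (E * (q*v*d*((real r+1) * (a+1+r) * (- real N + r)) - (real r+1) * (q*(- real m + r)*v*(u + r)*d))
     - (A * ((- real m - 1) * q * v' * (u + 1 + r) * d) - (A + C) * (q*(- real m + r)*v*(u + r)*d)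
        + C * (P1 * (- real m + 1 + r) * ((u - 1) * v) * d))) = 0"
    unfolding E_def A_def C_def using core_poly2[where m="real m" and r="real r" and N="real N" and a=a and b=b and d=d, OF u_def hv hp] .
  have c1': "cc m a b N (Suc r) = q*(- real m + r)*v*(u + r)*d" unfolding c1 by simp
  have XY: "(E * (q*v*d*((real r+1) * (a+1+r) * (- real N + r)) - (real r+1) * (q*(- real m + r)*v*(u + r)*d))
     - (A * ((- real m - 1) * q * v' * (u + 1 + r) * d) - (A + C) * (q*(- real m + r)*v*(u + r)*d)
        + C * (P1 * (- real m + 1 + r) * ((u - 1) * v) * d))) = 0"
    using key um by (simp only: mult_eq_0_iff) blast
  show ?thesis unfolding c0 c1' c2 c3 of_nat_add of_nat_1 using XY by (simp only: right_minus_eq)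
qed

lemma S_alg:
  fixes k l n m al be :: real
  shows "((k+l+m+1) - k - l - 1) * ((k+l+m+1) + be + al + n) * ((k+l+m+1) + l + al - k - 1) * (2 * (k+l+m+1) + be + al)
     / ((2 * (k+l+m+1) + be + al - 2) * ((k+l+m+1) + k + l + be + al) * ((k+l+m+1) + k + be - l) * ((k+l+m+1) - n - 1))
   = - (m*(m+(be+2*k)+(al+2*l)+(n-k-l)+1)*(m+(al+2*l))*(2*m+(be+2*k)+(al+2*l)+2)) / ((m+(be+2*k)+(al+2*l)+1)*(m+(be+2*k)+1)*((n-k-l)-m)*(2*m+(be+2*k)+(al+2*l)))"
proof -
  have e1: "(m+(be+2*k)+(al+2*l)+1) = (k+l+m+1) + k + l + be + al" by simp
  have e2: "(m+(be+2*k)+1) = (k+l+m+1) + k + be - l" by simp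
  have e3: "((n-k-l)-m) = - ((k+l+m+1) - n - 1)" by simp
  have e4: "(2*m+(be+2*k)+(al+2*l)) = 2 * (k+l+m+1) + be + al - 2" by simp
  have e5: "2*m+(be+2*k)+(al+2*l)+2 = 2 * (k+l+m+1) + be + al" by simp
  have e6: "m+(be+2*k)+(al+2*l)+(n-k-l)+1 = (k+l+m+1) + be + al + n" by simp
  have e7: "m+(al+2*l) = (k+l+m+1) + l + al - k - 1" by simp
  have gen: "\<And>M P Q R T D1 D2 D3 D4::real. - (M*P*Q*R) / (D2*D3*(-D4)*D1) = M*P*Q*R/(D1*D2*D3*D4)"
    by (simp add: mult_ac)
  show ?thesis unfolding e1 e2 e3 e4 e5 e6 e7 gen by (simp add: mult_ac)
qed

lemma P_alg:
  fixes m a b N x :: real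
  assumes A0: "(m+a+b+1)*(m+a+1)*(N-m)*(2*m+a+b) \<noteq> 0"
  shows "1 - (- (m*(m+a+b+N+1)*(m+b)*(2*m+a+b+2)) / ((m+a+b+1)*(m+a+1)*(N-m)*(2*m+a+b)))
     - (- x) * ((2*m+a+b+1)*(2*m+a+b+2)) / ((m+a+b+1)*(m+a+1)*(m-N))
   = ((m+a+b+1)*(m+a+1)*(N-m)*(2*m+a+b) + m*(m+a+b+N+1)*(m+b)*(2*m+a+b+2) - x * ((2*m+a+b)*(2*m+a+b+1)*(2*m+a+b+2)))
     / ((m+a+b+1)*(m+a+1)*(N-m)*(2*m+a+b))"
proof -
  define A where "A = (m+a+b+1)*(m+a+1)*(N-m)*(2*m+a+b)"
  define C where "C = m*(m+a+b+N+1)*(m+b)*(2*m+a+b+2)"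
  define F where "F = (2*m+a+b+1)*(2*m+a+b+2)"
  define G' where "G' = (m+a+b+1)*(m+a+1)*(N-m)"
  define c where "c = 2*m+a+b"
  have c0: "c \<noteq> 0" using A0 unfolding c_def by auto
  have A0': "A \<noteq> 0" using A0 unfolding A_def .
  have EA: "(2*m+a+b)*(2*m+a+b+1)*(2*m+a+b+2) / A = F / G'"
    unfolding A_def F_def G'_def c_def[symmetric] using c0 by (simp add: mult_ac)
  have GG: "(m+a+b+1)*(m+a+1)*(m-N) = - G'" unfolding G'_def by (simp add: algebra_simps)
  have "1 - (- C / A) - (- x) * F / (- G') = (A + C - x * ((2*m+a+b)*(2*m+a+b+1)*(2*m+a+b+2))) / A"
  proof -
    have "(A + C - x * ((2*m+a+b)*(2*m+a+b+1)*(2*m+a+b+2))) / A = A/A + C/A - x * ((2*m+a+b)*(2*m+a+b+1)*(2*m+a+b+2) / A)"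
      by (simp add: add_divide_distrib diff_divide_distrib)
    also have "\<dots> = 1 + C/A - x * (F / G')" using A0' EA by simp
    finally show ?thesis by simp
  qed
  then show ?thesis unfolding A_def[symmetric] C_def[symmetric] F_def[symmetric] GG .
qed

lemma solve_aux:
  fixes A q1 p q0 c q2 :: real
  assumes "A \<noteq> 0" "A*q1 = p*q0 - c*q2"
  shows "q1 = p/A*q0 + (-c/A)*q2"
  using assms by (simp add: field_simps)

lemma cc_0 [simp]: "cc m a b N 0 = 1" by (simp add: cc_def)

lemma cc_beyond: "m < j \<Longrightarrow> cc m a b N j = 0"
  by (simp add: cc_def pochhammer_of_nat_eq_0_iff)

lemma hahn_rec3:
  assumes m1: "1 \<le> m" and mN: "m + 1 \<le> N" and a: "a + 1 > 0"
    and u: "real m + a + b + 1 > 0"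
  defines "E \<equiv> (2*real m+a+b)*(2*real m+a+b+1)*(2*real m+a+b+2)"
    and "A \<equiv> (real m+a+b+1)*(real m+a+1)*(real N-real m)*(2*real m+a+b)"
    and "C \<equiv> real m*(real m+a+b+real N+1)*(real m+b)*(2*real m+a+b+2)"
  shows "- x * E * hahnQ m x a b N = A * hahnQ (m+1) x a b N - (A + C) * hahnQ m x a b N + C * hahnQ (m-1) x a b N"
proof -
  define p where "p j = pochhammer (- x) j" for j
  define T where "T r = E * (cc m a b N r - (real r+1) * cc m a b N (Suc r))" for r
  have Q: "hahnQ k x a b N = (\<Sum>j=0..Suc m. cc k a b N j * p j)" if "k \<le> Suc m" for k
    unfolding p_def using hahn_ext[OF that] .
  have px: "- x * p j = p (Suc j) - real j * p j" for j
    unfolding p_def by (simp add: pochhammer_Suc algebra_simps)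
  have "- x * E * hahnQ m x a b N = (\<Sum>j=0..Suc m. E * cc m a b N j * p (Suc j)) - (\<Sum>j=0..Suc m. E * (real j * cc m a b N j) * p j)"
    unfolding Q[of m, OF le_SucI[OF order_refl]] sum_distrib_left sum_subtractf[symmetric]
    by (rule sum.cong) (simp_all add: p_def pochhammer_Suc algebra_simps)
  also have "(\<Sum>j=0..Suc m. E * cc m a b N j * p (Suc j)) = (\<Sum>r=0..m. E * cc m a b N r * p (Suc r))"
    by (simp add: sum.atLeast0_atMost_Suc cc_beyond)
  also have "(\<Sum>j=0..Suc m. E * (real j * cc m a b N j) * p j) = (\<Sum>r=0..m. E * ((real r + 1) * cc m a b N (Suc r)) * p (Suc r))"
    by (subst sum.atLeast0_atMost_Suc_shift) (simp add: add.commute)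
  also have "(\<Sum>r=0..m. E * cc m a b N r * p (Suc r)) - (\<Sum>r=0..m. E * ((real r + 1) * cc m a b N (Suc r)) * p (Suc r))
      = (\<Sum>r=0..m. T r * p (Suc r))"
    unfolding sum_subtractf[symmetric] T_def by (rule sum.cong) (simp_all add: algebra_simps)
  also have "\<dots> = (\<Sum>r=0..m. (A * cc (m+1) a b N (Suc r) - (A + C) * cc m a b N (Suc r) + C * cc (m-1) a b N (Suc r)) * p (Suc r))"
    by (rule sum.cong) (simp_all add: T_def E_def A_def C_def term_id[OF m1 mN _ a u])
  also have "\<dots> = (\<Sum>j=0..Suc m. (A * cc (m+1) a b N j - (A + C) * cc m a b N j + C * cc (m-1) a b N j) * p j)"
    by (subst sum.atLeast0_atMost_Suc_shift) simp
  also have "\<dots> = A * hahnQ (m+1) x a b N - (A + C) * hahnQ m x a b N + C * hahnQ (m-1) x a b N"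
    using m1 by (simp add: Q sum_distrib_left sum.distrib sum_subtractf algebra_simps)
  finally show ?thesis .
qed
theorem theorem3:
  fixes n k l h :: nat and \<alpha> \<beta> :: real
  assumes "k + l \<le> n" and "\<alpha> > -1" and "\<beta> > -1"
    and "k \<le> h" and "h \<le> n - l"
  shows
    "(pochhammer (real k + real l + \<alpha> + \<beta> + 1) (n + 1 - k - l) \<noteq> 0 \<longrightarrow>
       zcoef n k l \<alpha> \<beta> h (k + l) =
         real (n choose h) * pochhammer (\<alpha> + 2 * real l + 1) (n - l - h)
           * pochhammer (\<beta> + 2 * real k + 1) (h - k)
         / pochhammer (2 * real k + 2 * real l + (\<alpha> + \<beta> + 1) + 1) (n - k - l))
   \<and> (\<forall>i. k + l + 1 \<le> i \<and> i \<le> n \<and> 2 * real i + \<alpha> + \<beta> - 1 \<noteq> 0 \<longrightarrow>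
       zcoef n k l \<alpha> \<beta> h i =
         (2 * real i + (\<alpha> + \<beta> + 1)) * (real i + real k + real l + \<alpha> + \<beta>) * (real i - real n - 1)
         / ((\<alpha> + real l + real i - real k) * (real i + real n + (\<alpha> + \<beta> + 1)) * (2 * real i + \<alpha> + \<beta> - 1))
         * zcoef n k l \<alpha> \<beta> h (i - 1))
   \<and> wcoef n k l \<alpha> \<beta> h (k + l) = 1
   \<and> (k + l + 1 \<le> n \<longrightarrow>
       wcoef n k l \<alpha> \<beta> h (k + l + 1) =
         1 + (real h - real k) * (2 * real k + 2 * real l + (\<alpha> + \<beta> + 1) + 1)
             / ((real k + real l - real n) * (\<beta> + 2 * real k + 1)))
   \<and> (\<forall>i. k + l + 2 \<le> i \<and> i \<le> n \<longrightarrow>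
       wcoef n k l \<alpha> \<beta> h i =
         Pcoef n k l \<alpha> \<beta> h i * wcoef n k l \<alpha> \<beta> h (i - 1)
         + Scoef n k l \<alpha> \<beta> i * wcoef n k l \<alpha> \<beta> h (i - 2))"
proof -
  note kl = assms(1) and al = assms(2) and be = assms(3) and kh = assms(4) and hn = assms(5)
  define \<sigma> where "\<sigma> = \<alpha> + \<beta> + 1"
  have sig: "\<sigma> > -1" using al be unfolding \<sigma>_def by simp
  have Z1: "zcoef n k l \<alpha> \<beta> h (k + l) =
         real (n choose h) * pochhammer (\<alpha> + 2 * real l + 1) (n - l - h)
           * pochhammer (\<beta> + 2 * real k + 1) (h - k)
         / pochhammer (2 * real k + 2 * real l + (\<alpha> + \<beta> + 1) + 1) (n - k - l)"
    if H: "pochhammer (real k + real l + \<alpha> + \<beta> + 1) (n + 1 - k - l) \<noteq> 0"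
  proof -
    define y where "y = 2 * real k + 2 * real l + \<sigma>"
    have e: "n + 1 - k - l = Suc (n - k - l)" using kl by simp
    have y0: "y \<noteq> 0"
    proof (cases "k + l = 0")
      case True
      then have "pochhammer \<sigma> (Suc (n - k - l)) \<noteq> 0" using H unfolding e \<sigma>_def by (simp add: add_ac)
      then show ?thesis using True unfolding y_def by (simp add: pochhammer_rec)
    next
      case False
      then have "real k + real l \<ge> 1" by linarith
      then show ?thesis using sig unfolding y_def by linarith
    qed
    have pe: "pochhammer (real (k + l) + real k + real l + \<sigma>) (n + 1 - k - l)
        = y * pochhammer (2 * real k + 2 * real l + (\<alpha> + \<beta> + 1) + 1) (n - k - l)"
      unfolding e pochhammer_rec y_def \<sigma>_def by (simp add: algebra_simps)
    show ?thesis
    proof (cases "pochhammer (2 * real k + 2 * real l + (\<alpha> + \<beta> + 1) + 1) (n - k - l) = 0")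
      case True
      then show ?thesis unfolding zcoef_def Let_def \<sigma>_def[symmetric] pe by simp
    next
      case False
      have y2: "2 * real (k + l) + \<sigma> = y" unfolding y_def by simp
      show ?thesis unfolding zcoef_def Let_def \<sigma>_def[symmetric] pe y2 using False y0 by simp
    qed
  qed
  have W0: "wcoef n k l \<alpha> \<beta> h (k + l) = 1" unfolding wcoef_def hahnQ_def by simp
  have W1: "wcoef n k l \<alpha> \<beta> h (k + l + 1) =
         1 + (real h - real k) * (2 * real k + 2 * real l + (\<alpha> + \<beta> + 1) + 1)
             / ((real k + real l - real n) * (\<beta> + 2 * real k + 1))"
    if H: "k + l + 1 \<le> n"
  proof -
    have e: "k + l + 1 - k - l = 1" by simp
    have N: "real (n - k - l) = real n - real k - real l" using kl by simp
    have b0: "\<beta> + 2 * real k + 1 \<noteq> 0" using be by simp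
    have n0: "real k + real l - real n \<noteq> 0" using H by simp
    show ?thesis unfolding wcoef_def hahnQ_def e N using b0 n0
      by (simp add: field_simps)
  qed
  have W2: "wcoef n k l \<alpha> \<beta> h i =
         Pcoef n k l \<alpha> \<beta> h i * wcoef n k l \<alpha> \<beta> h (i - 1)
         + Scoef n k l \<alpha> \<beta> i * wcoef n k l \<alpha> \<beta> h (i - 2)"
    if H: "k + l + 2 \<le> i" "i \<le> n" for i
  proof -
    define m where "m = i - k - l - 1"
    have m1: "1 \<le> m" and im: "i = k + l + m + 1" using H unfolding m_def by auto
    define N where "N = n - k - l"
    define a where "a = \<beta> + 2 * real k"
    define b where "b = \<alpha> + 2 * real l"
    define x where "x = real h - real k"
    have mN: "m + 1 \<le> N" using H unfolding N_def m_def by auto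
    have a1: "a + 1 > 0" using be unfolding a_def by simp
    have u: "real m + a + b + 1 > 0" using m1 al be unfolding a_def b_def by simp
    define E where "E = (2*real m+a+b)*(2*real m+a+b+1)*(2*real m+a+b+2)"
    define A where "A = (real m+a+b+1)*(real m+a+1)*(real N-real m)*(2*real m+a+b)"
    define C where "C = real m*(real m+a+b+real N+1)*(real m+b)*(2*real m+a+b+2)"
    have rec: "- x * E * hahnQ m x a b N = A * hahnQ (m+1) x a b N - (A + C) * hahnQ m x a b N + C * hahnQ (m-1) x a b N"
      unfolding E_def A_def C_def by (rule hahn_rec3[OF m1 mN a1 u])
    have wi: "wcoef n k l \<alpha> \<beta> h i = hahnQ (m+1) x a b N"
      unfolding wcoef_def im x_def a_def b_def N_def by simp
    have wi1: "wcoef n k l \<alpha> \<beta> h (i-1) = hahnQ m x a b N"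
      unfolding wcoef_def im x_def a_def b_def N_def by simp
    have wi2: "wcoef n k l \<alpha> \<beta> h (i-2) = hahnQ (m-1) x a b N"
      unfolding wcoef_def im x_def a_def b_def N_def by (simp add: numeral_2_eq_2)
    have ri: "real i = real k + real l + real m + 1" unfolding im by simp
    have rN: "real N = real n - real k - real l" unfolding N_def using kl by simp
    have Nm: "real N - real m > 0" using mN by simp
    have f1: "real m + a + 1 > 0" using a1 by simp
    have f2: "2*real m+a+b > 0" using u m1 by simp
    have A0: "A \<noteq> 0" unfolding A_def using u f1 Nm f2 by simp
    have S: "Scoef n k l \<alpha> \<beta> i = - C / A"
      unfolding Scoef_def C_def A_def ri rN a_def b_def by (rule S_alg)
    have P: "Pcoef n k l \<alpha> \<beta> h i = (A + C - x * E) / A"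
    proof -
      have q1: "2 * real i + \<alpha> + \<beta> - 1 = 2*real m+a+b+1" and q2: "2 * real i + \<alpha> + \<beta> - 1 + 1 = 2*real m+a+b+2"
        and q3: "real i + real k + real l + \<alpha> + \<beta> = real m+a+b+1"
        and q4: "real i + real k + \<beta> - real l = real m+a+1" and q5: "real i - real n - 1 = real m - real N"
        and q6: "real k - real h = - x" and q7: "2*real m+a+b+1+1 = 2*real m+a+b+2"
        unfolding ri rN a_def b_def x_def by simp_all
      have "Pcoef n k l \<alpha> \<beta> h i = 1 - (- C / A)
         - (- x) * ((2*real m+a+b+1)*(2*real m+a+b+2)) / ((real m+a+b+1)*(real m+a+1)*(real m-real N))"
        unfolding Pcoef_def S[symmetric] numeral_2_eq_2 pochhammer_Suc pochhammer_0 q1 q2[unfolded add.assoc] 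
        by (simp only: q1 q2 q3 q4 q5 q6 q7 mult_1 of_nat_0 of_nat_Suc add_0_right)
      also have "\<dots> = (A + C - x * E) / A"
        unfolding A_def C_def E_def by (rule P_alg[OF A0[unfolded A_def]])
      finally show ?thesis .
    qed
    have "A * hahnQ (m+1) x a b N = (A + C - x * E) * hahnQ m x a b N - C * hahnQ (m-1) x a b N"
      using rec by (simp add: algebra_simps)
    then have "hahnQ (m+1) x a b N = (A + C - x * E) / A * hahnQ m x a b N + (- C / A) * hahnQ (m-1) x a b N"
      by (rule solve_aux[OF A0])
    then show ?thesis unfolding wi wi1 wi2 P S .
  qed
  have Z2: "zcoef n k l \<alpha> \<beta> h i =
         (2 * real i + (\<alpha> + \<beta> + 1)) * (real i + real k + real l + \<alpha> + \<beta>) * (real i - real n - 1)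
         / ((\<alpha> + real l + real i - real k) * (real i + real n + (\<alpha> + \<beta> + 1)) * (2 * real i + \<alpha> + \<beta> - 1))
         * zcoef n k l \<alpha> \<beta> h (i - 1)"
    if H: "k + l + 1 \<le> i" "i \<le> n" "2 * real i + \<alpha> + \<beta> - 1 \<noteq> 0" for i
  proof -
    define m where "m = i - k - l - 1"
    have im: "i = k + l + m + 1" using H unfolding m_def by auto
    define N where "N = n - k - l"
    have e1: "i - k - l = Suc m" and e2: "i - 1 - k - l = m" and e3: "n + 1 - k - l = Suc N"
      using H kl unfolding im N_def by auto
    have ri: "real i = real k + real l + real m + 1" unfolding im by simp
    have ri1: "real (i - 1) = real k + real l + real m" unfolding im by simp
    have rN: "real N = real n - real k - real l" unfolding N_def using kl by simp
    define y where "y = real k + real l + real m + real k + real l + \<sigma>"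
    define B where "B = real (n choose h)"
    define R where "R = pochhammer (real k + real l - real n) m"
    define Pa where "Pa = pochhammer (\<alpha> + 2 * real l + 1) m"
    define Pb where "Pb = pochhammer (y + 1) N"
    define Y where "Y = pochhammer (\<alpha> + 2 * real l + 1) (n - l - h)"
    define Z where "Z = pochhammer (\<beta> + 2 * real k + 1) (h - k)"
    have y1: "y + 1 > 0" using sig unfolding y_def by simp
    have Pb0: "Pb > 0" unfolding Pb_def using pochhammer_pos[OF y1] .
    have Pa0: "Pa > 0" unfolding Pa_def using al by (intro pochhammer_pos) simp
    have y0: "y \<noteq> 0"
    proof (cases "k + l + m = 0")
      case True
      then show ?thesis using H(3) unfolding y_def ri \<sigma>_def by simp
    next
      case False
      then have "real k + real l + real m \<ge> 1" by linarith
      then show ?thesis using sig unfolding y_def by linarith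
    qed
    have zi: "zcoef n k l \<alpha> \<beta> h i = B * ((2 * real i + \<sigma>) * (R * (real k + real l - real n + real m)) * Y * Z)
        / ((Pa * (\<alpha> + 2 * real l + 1 + real m)) * (Pb * (y + 1 + real N)))"
    proof -
      have "pochhammer (real i + real k + real l + \<sigma>) (Suc N) = Pb * (y + 1 + real N)"
        unfolding Pb_def pochhammer_Suc y_def ri by (simp add: add_ac)
      then show ?thesis unfolding zcoef_def Let_def \<sigma>_def[symmetric] e1 e3 B_def R_def Pa_def Y_def Z_def
        by (simp add: pochhammer_Suc)
    qed
    have zi1: "zcoef n k l \<alpha> \<beta> h (i - 1) = B * ((2 * real i - 2 + \<sigma>) * R * Y * Z) / (Pa * (y * Pb))"
    proof -
      have "pochhammer (real (i - 1) + real k + real l + \<sigma>) (Suc N) = y * Pb"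
        unfolding Pb_def pochhammer_rec y_def ri1 by (simp add: add_ac)
      moreover have "2 * real (i - 1) + \<sigma> = 2 * real i - 2 + \<sigma>" unfolding ri ri1 by simp
      ultimately show ?thesis unfolding zcoef_def Let_def \<sigma>_def[symmetric] e2 e3 B_def R_def Pa_def Y_def Z_def
        by (simp add: mult.assoc)
    qed
    have f1: "\<alpha> + 2 * real l + 1 + real m > 0" using al by simp
    have f2: "y + 1 + real N > 0" using y1 by simp
    have q1: "real k + real l - real n + real m = real i - real n - 1" unfolding ri by simp
    have q2: "\<alpha> + 2 * real l + 1 + real m = \<alpha> + real l + real i - real k" unfolding ri by simp
    have q3: "y + 1 + real N = real i + real n + (\<alpha> + \<beta> + 1)" unfolding y_def rN ri \<sigma>_def by simp
    have q4: "y = real i + real k + real l + \<alpha> + \<beta>" unfolding y_def ri \<sigma>_def by simp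
    have q5: "2 * real i - 2 + \<sigma> = 2 * real i + \<alpha> + \<beta> - 1" unfolding \<sigma>_def by simp
    have q6: "2 * real i + \<sigma> = 2 * real i + (\<alpha> + \<beta> + 1)" unfolding \<sigma>_def by simp
    have gen: "\<And>B T R u Y Z Pa v Pb w y s. Pa \<noteq> 0 \<Longrightarrow> Pb \<noteq> 0 \<Longrightarrow> v \<noteq> 0 \<Longrightarrow> w \<noteq> 0 \<Longrightarrow> y \<noteq> 0 \<Longrightarrow> s \<noteq> 0 \<Longrightarrow>
        (B::real) * (T * (R * u) * Y * Z) / ((Pa * v) * (Pb * w)) = T * y * u / (v * w * s) * (B * (s * R * Y * Z) / (Pa * (y * Pb)))"
      by (simp add: field_simps)
    have Feq: "(2 * real i + (\<alpha> + \<beta> + 1)) * (real i + real k + real l + \<alpha> + \<beta>) * (real i - real n - 1)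
         / ((\<alpha> + real l + real i - real k) * (real i + real n + (\<alpha> + \<beta> + 1)) * (2 * real i + \<alpha> + \<beta> - 1))
       = (2 * real i + \<sigma>) * y * (real k + real l - real n + real m)
         / ((\<alpha> + 2 * real l + 1 + real m) * (y + 1 + real N) * (2 * real i - 2 + \<sigma>))"
      unfolding y_def ri rN \<sigma>_def by (simp add: algebra_simps)
    have s0: "2 * real i - 2 + \<sigma> \<noteq> 0" using H(3) unfolding \<sigma>_def by simp
    show ?thesis unfolding zi zi1 Feq
      by (rule gen) (use Pa0 Pb0 f1 f2 y0 s0 in auto)
  qed
  show ?thesis using Z1 Z2 W0 W1 W2 by blast
qed

end
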